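(* Let $\mathsf V$ be a variety. If $\mathsf V$ has unitary e-generalization $2$-type, then $\mathsf V$ has unitary e-generalization type.
   Context: Let $\mathsf V$ be a variety of algebras of a fixed type. For a set $X$, $\mathbf F_{\mathsf V}(X)$ denotes the free algebra of $\mathsf V$ over $X$; its elements are called terms (terms are identified up to the equational theory of $\mathsf V$). A substitution is a homomorphism between free algebras of $\mathsf V$. A symbolic e-generalization problem for $\mathsf V$ is a finite multiset $\mathbf t=\{t_1,\dots,t_m\}$ ($m\ge 1$) of elements of $\mathbf F_{\mathsf V}(X)$ for some finite $X$. A solution (generalizer) of $\mathbf t$ is a term $s\in\mathbf F_{\mathsf V}(Y)$, where $Y$ is the set of variables of $s$, such that there exist substitutions $\sigma_1,\dots,\sigma_m$ with $\sigma_k(s)=t_k$ in $\mathsf V$ for all $k$. For terms $s,u$ write $s\preceq u$ ($s$ is less general than $u$) iff there is a substitution $\sigma$ with $\sigma(u)=s$; this is a preorder on the set of solutions of $\mathbf t$, and $(\mathscr S(\mathbf t),\preceq)$ denotes the associated poset of classes of equally general solutions. In a poset $(P,\le)$ a minimal complete set is a subset $M\subseteq P$ such that every $p\in P$ has some $a\in M$ with $a\le p$, and no two distinct elements of $M$ are comparable. The e-generalization type of $\mathbf t$ is unitary if $(\mathscr S(\mathbf t),\preceq)$ has a minimal complete set of cardinality 1, finitary if it has one of finite cardinality greater than 1, infinitary if it has one of infinite cardinality, and nullary if it has none. For $m\in\mathbb N\setminus\{0\}$, the e-generalization $m$-type of $\mathsf V$ is the worst type occurring among problems for $\mathsf V$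 whose multiset has cardinality at most $m$, where the order from best to worst is unitary $>$ finitary $>$ infinitary $>$ nullary; the e-generalization type of $\mathsf V$ is the worst type among all its problems. *)

theory Defs
  imports Main "HOL-Library.Multiset"
begin

datatype 'f trm = Var nat | Fun 'f "'f trm list"

fun wf_trm :: "('f \<Rightarrow> nat) \<Rightarrow> 'f trm \<Rightarrow> bool" where
  "wf_trm ar (Var x) = True"
| "wf_trm ar (Fun f ts) = (length ts = ar f \<and> (\<forall>t\<in>set ts. wf_trm ar t))"

fun subst :: "(nat \<Rightarrow> 'f trm) \<Rightarrow> 'f trm \<Rightarrow> 'f trm" where
  "subst \<sigma> (Var x) = \<sigma> x"
| "subst \<sigma> (Fun f ts) = Fun f (map (subst \<sigma>) ts)"

definition wf_subst :: "('f \<Rightarrow> nat) \<Rightarrow> (nat \<Rightarrow> 'f trm) \<Rightarrow> bool" where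
  "wf_subst ar \<sigma> = (\<forall>x. wf_trm ar (\<sigma> x))"

text \<open>Equational theory of the variety V = Mod(E) (Birkhoff's equational logic):
  eqv ar E s t means that s = t holds in V.\<close>

inductive eqv :: "('f \<Rightarrow> nat) \<Rightarrow> ('f trm \<times> 'f trm) set \<Rightarrow> 'f trm \<Rightarrow> 'f trm \<Rightarrow> bool"
  for ar E where
  axiom: "(l, r) \<in> E \<Longrightarrow> wf_subst ar \<sigma> \<Longrightarrow> eqv ar E (subst \<sigma> l) (subst \<sigma> r)"
| refl: "wf_trm ar t \<Longrightarrow> eqv ar E t t"
| sym: "eqv ar E s t \<Longrightarrow> eqv ar E t s"
| trans: "eqv ar E s t \<Longrightarrow> eqv ar E t u \<Longrightarrow> eqv ar E s u"
| cong: "wf_trm ar (Fun f ts) \<Longrightarrow> i < length ts \<Longrightarrow> eqv ar E (ts ! i) u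
         \<Longrightarrow> eqv ar E (Fun f ts) (Fun f (ts[i := u]))"

definition variety :: "('f \<Rightarrow> nat) \<Rightarrow> ('f trm \<times> 'f trm) set \<Rightarrow> bool" where
  "variety ar E = (\<forall>(l, r)\<in>E. wf_trm ar l \<and> wf_trm ar r)"

definition gen_problem :: "('f \<Rightarrow> nat) \<Rightarrow> 'f trm multiset \<Rightarrow> bool" where
  "gen_problem ar T = (T \<noteq> {#} \<and> (\<forall>t\<in>#T. wf_trm ar t))"

definition generalizer ::
  "('f \<Rightarrow> nat) \<Rightarrow> ('f trm \<times> 'f trm) set \<Rightarrow> 'f trm multiset \<Rightarrow> 'f trm \<Rightarrow> bool" where
  "generalizer ar E T s = (wf_trm ar s \<and>
     (\<forall>t\<in>#T. \<exists>\<sigma>. wf_subst ar \<sigma> \<and> eqv ar E (subst \<sigma> s) t))"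

definition less_general ::
  "('f \<Rightarrow> nat) \<Rightarrow> ('f trm \<times> 'f trm) set \<Rightarrow> 'f trm \<Rightarrow> 'f trm \<Rightarrow> bool" where
  "less_general ar E s u = (\<exists>\<sigma>. wf_subst ar \<sigma> \<and> eqv ar E (subst \<sigma> u) s)"

text \<open>A minimal complete set of the poset of classes of solutions, given by a set M of
  representatives (one per class, pairwise incomparable).\<close>

definition minimal_complete ::
  "('f \<Rightarrow> nat) \<Rightarrow> ('f trm \<times> 'f trm) set \<Rightarrow> 'f trm multiset \<Rightarrow> 'f trm set \<Rightarrow> bool" where
  "minimal_complete ar E T M =
     (M \<subseteq> {s. generalizer ar E T s} \<and>
      (\<forall>p. generalizer ar E T p \<longrightarrow> (\<exists>a\<in>M. less_general ar E a p)) \<and>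
      (\<forall>a\<in>M. \<forall>b\<in>M. less_general ar E a b \<longrightarrow> a = b))"

definition unitary_problem ::
  "('f \<Rightarrow> nat) \<Rightarrow> ('f trm \<times> 'f trm) set \<Rightarrow> 'f trm multiset \<Rightarrow> bool" where
  "unitary_problem ar E T = (\<exists>M. minimal_complete ar E T M \<and> card M = 1)"

text \<open>Unitary is the best type, so the worst type among a family of problems is unitary
  iff every problem in the family is unitary.\<close>

definition unitary_mtype :: "('f \<Rightarrow> nat) \<Rightarrow> ('f trm \<times> 'f trm) set \<Rightarrow> nat \<Rightarrow> bool" where
  "unitary_mtype ar E m =
     (\<forall>T. gen_problem ar T \<and> size T \<le> m \<longrightarrow> unitary_problem ar E T)"

definition unitary_type :: "('f \<Rightarrow> nat) \<Rightarrow> ('f trm \<times> 'f trm) set \<Rightarrow> bool" where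
  "unitary_type ar E = (\<forall>T. gen_problem ar T \<longrightarrow> unitary_problem ar E T)"

end

theory Submission
  imports Defs
begin

lemma wf_subst_trm: "wf_subst ar \<sigma> \<Longrightarrow> wf_trm ar t \<Longrightarrow> wf_trm ar (subst \<sigma> t)"
  by (induction t) (auto simp: wf_subst_def)

lemma subst_comp: "subst \<tau> (subst \<sigma> p) = subst (\<lambda>x. subst \<tau> (\<sigma> x)) p"
  by (induction p) auto

lemma wf_subst_comp: "wf_subst ar \<tau> \<Longrightarrow> wf_subst ar \<sigma> \<Longrightarrow> wf_subst ar (\<lambda>x. subst \<tau> (\<sigma> x))"
  by (auto simp: wf_subst_def intro: wf_subst_trm)

lemma eqv_subst: "eqv ar E s t \<Longrightarrow> wf_subst ar \<tau> \<Longrightarrow> eqv ar E (subst \<tau> s) (subst \<tau> t)"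
proof (induction rule: eqv.induct)
  case (axiom l r \<sigma>)
  then show ?case using eqv.axiom[of l r E ar "\<lambda>x. subst \<tau> (\<sigma> x)"]
    by (simp add: subst_comp wf_subst_comp)
next
  case (refl t)
  then show ?case by (simp add: eqv.refl wf_subst_trm)
next
  case (sym s t)
  then show ?case by (simp add: eqv.sym)
next
  case (trans s t u)
  then show ?case by (meson eqv.trans)
next
  case (cong f ts i u)
  have w: "wf_trm ar (Fun f (map (subst \<tau>) ts))"
    using cong wf_subst_trm[OF cong(5) cong(1)] by simp
  have "eqv ar E (Fun f (map (subst \<tau>) ts)) (Fun f ((map (subst \<tau>) ts)[i := subst \<tau> u]))"
    using eqv.cong[OF w, where i=i and u="subst \<tau> u"] cong by simp
  then show ?case by (simp add: map_update)
qed

definition gen_of where "gen_of ar E s t = (\<exists>\<sigma>. wf_subst ar \<sigma> \<and> eqv ar E (subst \<sigma> s) t)"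

lemma gen_of_trans: "gen_of ar E p g \<Longrightarrow> gen_of ar E g t \<Longrightarrow> gen_of ar E p t"
proof -
  assume "gen_of ar E p g" "gen_of ar E g t"
  then obtain \<sigma> \<tau> where s: "wf_subst ar \<sigma>" "eqv ar E (subst \<sigma> p) g"
    and t: "wf_subst ar \<tau>" "eqv ar E (subst \<tau> g) t" unfolding gen_of_def by blast
  have "eqv ar E (subst \<tau> (subst \<sigma> p)) (subst \<tau> g)" using eqv_subst s t by blast
  then have "eqv ar E (subst (\<lambda>x. subst \<tau> (\<sigma> x)) p) t" using t eqv.trans subst_comp by metis
  then show ?thesis unfolding gen_of_def using wf_subst_comp[OF t(1) s(1)] by blast
qed

lemma unitary_least:
  assumes "unitary_problem ar E T"
  shows "\<exists>g. generalizer ar E T g \<and> (\<forall>p. generalizer ar E T p \<longrightarrow> gen_of ar E p g)"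
proof -
  obtain M where M: "minimal_complete ar E T M" "card M = 1"
    using assms unfolding unitary_problem_def by blast
  then obtain a where "M = {a}" using card_1_singletonE by blast
  then show ?thesis using M unfolding minimal_complete_def less_general_def gen_of_def by auto
qed

lemma main:
  assumes u: "unitary_mtype ar E 2"
  shows "T \<noteq> {#} \<Longrightarrow> (\<forall>t\<in>#T. wf_trm ar t) \<Longrightarrow>
    \<exists>g. generalizer ar E T g \<and> (\<forall>p. generalizer ar E T p \<longrightarrow> gen_of ar E p g)"
proof (induction T rule: multiset_induct)
  case empty
  then show ?case by simp
next
  case (add x T)
  show ?case
  proof (cases "T = {#}")
    case True
    then show ?thesis using u add.prems unfolding unitary_mtype_def gen_problem_def
      by (intro unitary_least) auto
  next
    case False
    then obtain g where g: "generalizer ar E T g" "\<forall>p. generalizer ar E T p \<longrightarrow> gen_of ar E p g"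
      using add by auto
    have "unitary_problem ar E {#g, x#}"
      using u g(1) add.prems unfolding unitary_mtype_def gen_problem_def generalizer_def by auto
    then obtain h where h: "generalizer ar E {#g, x#} h"
      "\<forall>p. generalizer ar E {#g, x#} p \<longrightarrow> gen_of ar E p h"
      using unitary_least by blast
    have hg: "gen_of ar E h g" and hx: "gen_of ar E h x" and wh: "wf_trm ar h"
      using h(1) unfolding generalizer_def gen_of_def by auto
    have "generalizer ar E (add_mset x T) h"
      using g(1) hg hx wh gen_of_trans unfolding generalizer_def gen_of_def[symmetric] by (auto intro: gen_of_trans[of ar E h g])
    moreover have "gen_of ar E p h" if p: "generalizer ar E (add_mset x T) p" for p
    proof -
      have "generalizer ar E T p" using p unfolding generalizer_def by auto
      then have "gen_of ar E p g" using g(2) by blast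
      moreover have "gen_of ar E p x" using p unfolding generalizer_def gen_of_def by auto
      ultimately have "generalizer ar E {#g, x#} p" using p
        unfolding generalizer_def gen_of_def by auto
      then show ?thesis using h(2) by blast
    qed
    ultimately show ?thesis by blast
  qed
qed

theorem proposition2p7:
  fixes ar :: "'f \<Rightarrow> nat" and E :: "('f trm \<times> 'f trm) set"
  assumes "variety ar E"
    and "unitary_mtype ar E 2"
  shows "unitary_type ar E"
  unfolding unitary_type_def
proof (intro allI impI)
  fix T assume T: "gen_problem ar T"
  then obtain g where g: "generalizer ar E T g" "\<forall>p. generalizer ar E T p \<longrightarrow> gen_of ar E p g"
    using main[OF assms(2)] unfolding gen_problem_def by blast
  have "minimal_complete ar E T {g}"
    using g unfolding minimal_complete_def less_general_def gen_of_def by auto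
  then show "unitary_problem ar E T" unfolding unitary_problem_def by force
qed

end
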